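(* Let $\alpha\in\mathbb{R}$, let $p$ be a positive integer, $b\in\mathbb{R}$, and let $f$ be a real function defined on ${}_{b+p-1}\mathbb{N}=\{b+p-1,b+p-2,\dots\}$. Then for all $t\in{}_{b-p}\mathbb{N}$, $${}_{b}\nabla^{-\alpha}\,{}_{\ominus}\Delta^p f(t)={}_{\ominus}\Delta^p\,{}_{b}\nabla^{-\alpha}f(t)-\sum_{k=0}^{p-1}\frac{(b-t)^{\overline{\alpha-p+k}}}{\Gamma(\alpha+k-p+1)}\,{}_{\ominus}\Delta^k f(b).$$
   Context: Notation: ${}_{c}\mathbb{N}=\{c,c-1,\dots\}$, $\rho(t)=t-1$, $\Delta g(t)=g(t+1)-g(t)$, $\Delta^m=\Delta(\Delta^{m-1})$, ${}_{\ominus}\Delta^m g=(-1)^m\Delta^m g$. Rising factorial: $t^{\overline{\beta}}=\Gamma(t+\beta)/\Gamma(t)$ with $0^{\overline{\beta}}=0$; the reciprocal of $\Gamma$ at a pole is $0$. For $\gamma>0$ the nabla right fractional sum is ${}_{b}\nabla^{-\gamma}g(t)=\frac{1}{\Gamma(\gamma)}\sum_{s=t}^{b-1}(s-\rho(t))^{\overline{\gamma-1}}g(s)$, where a sum with upper limit smaller than lower limit is $0$ (so these sums vanish for $t\ge b$). For $\beta>0$ let $n=[\beta]+1$ with $[\beta]$ the greatest integer strictly less than $\beta$; the nabla right fractional difference is ${}_{b}\nabla^{\beta}g(t)={}_{\ominus}\Delta^n\,{}_{b}\nabla^{-(n-\beta)}g(t)=(-1)^n\Delta^n\,{}_{b}\nabla^{-(n-\beta)}g(t)$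 (order-$0$ operator = identity). In the claim, for $\alpha<0$ the symbol ${}_{b}\nabla^{-\alpha}$ means the nabla right fractional difference of order $-\alpha$, and for $\alpha=0$ it is the identity. *)

theory Defs
  imports "HOL-Analysis.Analysis"
begin

fun delta_pow :: "nat \<Rightarrow> (real \<Rightarrow> real) \<Rightarrow> real \<Rightarrow> real" where
  "delta_pow 0 g = g"
| "delta_pow (Suc m) g = (\<lambda>t. delta_pow m g (t + 1) - delta_pow m g t)"

definition ominus_delta_pow :: "nat \<Rightarrow> (real \<Rightarrow> real) \<Rightarrow> real \<Rightarrow> real" where
  "ominus_delta_pow m g = (\<lambda>t. (-1) ^ m * delta_pow m g t)"

text \<open>Rising factorial t^(beta bar) = Gamma(t+beta)/Gamma(t), with 0^(beta bar) = 0.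
  Division by Gamma at a pole (Gamma = 0 in Isabelle) yields 0, i.e. reciprocal of Gamma at a pole is 0.\<close>
definition rising :: "real \<Rightarrow> real \<Rightarrow> real" where
  "rising t \<beta> = (if t = 0 then 0 else Gamma (t + \<beta>) / Gamma t)"

text \<open>Nabla right fractional sum of order gamma > 0:
  (1/Gamma gamma) * sum_{s=t}^{b-1} (s - (t-1))^(gamma-1 bar) g(s), with s ranging over t, t+1, ...\<close>
definition nabla_sum :: "real \<Rightarrow> real \<Rightarrow> (real \<Rightarrow> real) \<Rightarrow> real \<Rightarrow> real" where
  "nabla_sum b \<gamma> g t =
     (1 / Gamma \<gamma>) * (\<Sum>j\<in>{j::nat. t + real j \<le> b - 1}.
        rising (t + real j - (t - 1)) (\<gamma> - 1) * g (t + real j))"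

text \<open>Nabla right fractional difference of order beta > 0, n = [beta] + 1 = ceiling beta;
  order-0 sum is the identity.\<close>
definition nabla_diff :: "real \<Rightarrow> real \<Rightarrow> (real \<Rightarrow> real) \<Rightarrow> real \<Rightarrow> real" where
  "nabla_diff b \<beta> g =
     (let n = nat \<lceil>\<beta>\<rceil> in
      ominus_delta_pow n (if real n - \<beta> = 0 then g else nabla_sum b (real n - \<beta>) g))"

definition nabla_op :: "real \<Rightarrow> real \<Rightarrow> (real \<Rightarrow> real) \<Rightarrow> real \<Rightarrow> real" where
  "nabla_op b \<alpha> g =
     (if \<alpha> > 0 then nabla_sum b \<alpha> g else if \<alpha> = 0 then g else nabla_diff b (- \<alpha>) g)"

end

theory Submission
  imports Defs
begin

definition Dm :: "(real \<Rightarrow> real) \<Rightarrow> real \<Rightarrow> real" where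
  "Dm g = (\<lambda>t. g t - g (t + 1))"

definition cf :: "real \<Rightarrow> nat \<Rightarrow> real" where
  "cf \<gamma> i = pochhammer \<gamma> i / fact i"

definition Q :: "real \<Rightarrow> real \<Rightarrow> (real \<Rightarrow> real) \<Rightarrow> real \<Rightarrow> real" where
  "Q b \<gamma> g t = (\<Sum>i<nat \<lfloor>b - t\<rfloor>. cf \<gamma> i * g (t + real i))"

lemma odp_Suc: "ominus_delta_pow (Suc m) g = Dm (ominus_delta_pow m g)"
  by (rule ext) (simp add: ominus_delta_pow_def Dm_def algebra_simps)

lemma odp_funpow: "ominus_delta_pow m g = (Dm ^^ m) g"
proof (induction m)
  case 0
  then show ?case by (simp add: ominus_delta_pow_def)
next
  case (Suc m)
  then show ?case by (simp add: odp_Suc)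
qed

lemma set_eq: "{j::nat. t + real j \<le> b - 1} = {..<nat \<lfloor>b - t\<rfloor>}"
proof -
  have "t + real j \<le> b - 1 \<longleftrightarrow> j < nat \<lfloor>b - t\<rfloor>" for j
  proof -
    have "t + real j \<le> b - 1 \<longleftrightarrow> of_int (int j + 1) \<le> b - t" by auto
    also have "\<dots> \<longleftrightarrow> int j + 1 \<le> \<lfloor>b - t\<rfloor>" by (rule le_floor_iff[symmetric])
    also have "\<dots> \<longleftrightarrow> j < nat \<lfloor>b - t\<rfloor>" by auto
    finally show ?thesis .
  qed
  then show ?thesis by auto
qed

lemma L1:
  assumes "\<gamma> > 0"
  shows "nabla_sum b \<gamma> g = Q b \<gamma> g"
proof (rule ext)
  fix t
  have "rising (t + real j - (t - 1)) (\<gamma> - 1) / Gamma \<gamma> = cf \<gamma> j" for j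
  proof -
    have e: "t + real j - (t - 1) = 1 + real j" by simp
    have "\<gamma> \<notin> \<int>\<^sub>\<le>\<^sub>0" using assms by auto
    then have p: "pochhammer \<gamma> j = Gamma (\<gamma> + real j) / Gamma \<gamma>" by (rule pochhammer_Gamma)
    have "Gamma \<gamma> > 0" using assms by simp
    have "rising (1 + real j) (\<gamma> - 1) = Gamma (\<gamma> + real j) / fact j"
      unfolding rising_def by (simp add: Gamma_fact add.commute add.left_commute)
    then show ?thesis unfolding e cf_def p using \<open>Gamma \<gamma> > 0\<close> by simp
  qed
  then have "(1 / Gamma \<gamma>) * (rising (t + real j - (t - 1)) (\<gamma> - 1) * g (t + real j)) = cf \<gamma> j * g (t + real j)" for j
    by (metis (no_types, lifting) mult.assoc times_divide_eq_left mult_1 mult.commute)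
  then show "nabla_sum b \<gamma> g t = Q b \<gamma> g t"
    unfolding nabla_sum_def Q_def set_eq sum_distrib_left
    by (intro sum.cong) auto
qed

lemma cf_pascal: "cf (\<gamma> - 1) (Suc i) = cf \<gamma> (Suc i) - cf \<gamma> i"
proof -
  have a: "pochhammer (\<gamma> - 1) (Suc i) = (\<gamma> - 1) * pochhammer \<gamma> i"
    by (simp add: pochhammer_rec)
  have b: "pochhammer \<gamma> (Suc i) = (\<gamma> + real i) * pochhammer \<gamma> i"
    by (simp add: pochhammer_rec')
  have f: "fact (Suc i) = (real i + 1) * (fact i :: real)" by simp
  have "fact i > (0::real)" by simp
  have "(\<gamma> + real i) * pochhammer \<gamma> i / ((real i + 1) * fact i) - pochhammer \<gamma> i / fact i
     = ((\<gamma> + real i) * pochhammer \<gamma> i - (real i + 1) * pochhammer \<gamma> i) / ((real i + 1) * fact i)"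
    using \<open>fact i > (0::real)\<close> by (simp add: diff_divide_distrib)
  also have "\<dots> = (\<gamma> - 1) * pochhammer \<gamma> i / ((real i + 1) * fact i)"
    by (simp add: algebra_simps)
  finally show ?thesis unfolding cf_def a b f by simp
qed

lemma cf0[simp]: "cf \<gamma> 0 = 1" by (simp add: cf_def)

lemma floor_shift: "nat \<lfloor>b - (t + 1)\<rfloor> = nat \<lfloor>b - t\<rfloor> - 1"
proof -
  have "\<lfloor>b - (t + 1)\<rfloor> = \<lfloor>b - t\<rfloor> - 1"
    by (metis diff_diff_eq floor_diff_one)
  then show ?thesis by simp
qed

lemma L2: "Dm (Q b \<gamma> g) = Q b (\<gamma> - 1) g"
proof (rule ext)
  fix t
  show "Dm (Q b \<gamma> g) t = Q b (\<gamma> - 1) g t"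
  proof (cases "nat \<lfloor>b - t\<rfloor>")
    case 0
    then show ?thesis unfolding Dm_def Q_def floor_shift by simp
  next
    case (Suc M)
    have "Dm (Q b \<gamma> g) t = (\<Sum>i<Suc M. cf \<gamma> i * g (t + real i)) - (\<Sum>i<M. cf \<gamma> i * g (t + 1 + real i))"
      unfolding Dm_def Q_def floor_shift Suc by simp
    also have "\<dots> = g t + (\<Sum>i<M. (cf \<gamma> (Suc i) - cf \<gamma> i) * g (t + 1 + real i))"
      by (subst sum.lessThan_Suc_shift) (simp add: algebra_simps sum_subtractf)
    also have "\<dots> = (\<Sum>i<Suc M. cf (\<gamma> - 1) i * g (t + real i))"
      by (subst sum.lessThan_Suc_shift) (simp add: cf_pascal algebra_simps)
    finally show ?thesis unfolding Q_def Suc .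
  qed
qed

lemma L2iter: "(Dm ^^ n) (Q b \<gamma> g) = Q b (\<gamma> - real n) g"
  by (induction n) (simp_all add: L2 algebra_simps)

lemma L3:
  assumes "b - t = real (Suc M)"
  shows "Q b \<gamma> (Dm g) t = Q b (\<gamma> - 1) g t - cf \<gamma> M * g b"
proof -
  have N: "nat \<lfloor>b - t\<rfloor> = Suc M" using assms by simp
  have bt: "t + real (Suc M) = b" using assms by simp
  have "Q b \<gamma> (Dm g) t = (\<Sum>i<Suc M. cf \<gamma> i * g (t + real i)) - (\<Sum>i<Suc M. cf \<gamma> i * g (t + real (Suc i)))"
    unfolding Q_def N Dm_def by (simp add: sum_subtractf algebra_simps)
  also have "(\<Sum>i<Suc M. cf \<gamma> i * g (t + real (Suc i))) = (\<Sum>i<M. cf \<gamma> i * g (t + real (Suc i))) + cf \<gamma> M * g b"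
    using bt by simp
  also have "(\<Sum>i<Suc M. cf \<gamma> i * g (t + real i)) = g t + (\<Sum>i<M. cf \<gamma> (Suc i) * g (t + real (Suc i)))"
    by (subst sum.lessThan_Suc_shift) simp
  also have "(\<Sum>i<Suc M. cf (\<gamma> - 1) i * g (t + real i)) = g t + (\<Sum>i<M. (cf \<gamma> (Suc i) - cf \<gamma> i) * g (t + real (Suc i)))"
    by (subst sum.lessThan_Suc_shift) (simp add: cf_pascal)
  ultimately show ?thesis unfolding Q_def N by (simp add: algebra_simps sum_subtractf)
qed

lemma L3iter:
  assumes "b - t = real (Suc M)"
  shows "Q b \<gamma> ((Dm ^^ p) g) t = Q b (\<gamma> - real p) g t
           - (\<Sum>k<p. cf (\<gamma> - real p + real k + 1) M * (Dm ^^ k) g b)"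
proof (induction p arbitrary: \<gamma> g)
  case 0
  then show ?case by simp
next
  case (Suc p)
  have "Q b \<gamma> ((Dm ^^ Suc p) g) t = Q b \<gamma> ((Dm ^^ p) (Dm g)) t"
    by (simp add: funpow_Suc_right del: funpow.simps)
  also have "\<dots> = Q b (\<gamma> - real p) (Dm g) t
           - (\<Sum>k<p. cf (\<gamma> - real p + real k + 1) M * (Dm ^^ k) (Dm g) b)"
    by (rule Suc.IH)
  also have "Q b (\<gamma> - real p) (Dm g) t = Q b (\<gamma> - real p - 1) g t - cf (\<gamma> - real p) M * g b"
    by (rule L3[OF assms])
  also have "(\<Sum>k<p. cf (\<gamma> - real p + real k + 1) M * (Dm ^^ k) (Dm g) b)
      = (\<Sum>k<p. cf (\<gamma> - real (Suc p) + real (Suc k) + 1) M * (Dm ^^ Suc k) g b)"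
  proof (intro sum.cong refl)
    fix k
    have e: "\<gamma> - real (Suc p) + real (Suc k) + 1 = \<gamma> - real p + real k + 1" by simp
    show "cf (\<gamma> - real p + real k + 1) M * (Dm ^^ k) (Dm g) b
      = cf (\<gamma> - real (Suc p) + real (Suc k) + 1) M * (Dm ^^ Suc k) g b"
      unfolding e by (simp add: funpow_Suc_right del: funpow.simps)
  qed
  finally show ?case
    by (subst sum.lessThan_Suc_shift) (simp add: algebra_simps)
qed

lemma coef:
  assumes "\<gamma> \<notin> \<int>\<^sub>\<le>\<^sub>0 \<or> pochhammer \<gamma> i = 0"
  shows "rising (real (Suc i)) (\<gamma> - 1) / Gamma \<gamma> = cf \<gamma> i"
  using assms
proof
  assume g: "\<gamma> \<notin> \<int>\<^sub>\<le>\<^sub>0"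
  then have p: "pochhammer \<gamma> i = Gamma (\<gamma> + real i) / Gamma \<gamma>" by (rule pochhammer_Gamma)
  have "rising (real (Suc i)) (\<gamma> - 1) = Gamma (\<gamma> + real i) / fact i"
    unfolding rising_def using Gamma_fact[of i, where 'a=real] by (simp add: add.commute add.left_commute)
  then show ?thesis unfolding cf_def p by simp
next
  assume p0: "pochhammer \<gamma> i = 0"
  then obtain k where "k < i" "\<gamma> = - real k" by (auto simp: pochhammer_eq_0_iff)
  then have "Gamma \<gamma> = 0" by simp
  then show ?thesis unfolding cf_def p0 by simp
qed

lemma opA: "nabla_op b (- real n) g = (Dm ^^ n) g"
proof (cases "n = 0")
  case True then show ?thesis by (simp add: nabla_op_def)
next
  case False
  then have "- real n < 0" by simp
  then show ?thesis using False
    by (simp add: nabla_op_def nabla_diff_def Let_def odp_funpow)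
qed

lemma opB:
  assumes "\<not> (\<exists>n::nat. \<alpha> = - real n)"
  shows "nabla_op b \<alpha> g = Q b \<alpha> g"
proof (cases "\<alpha> > 0")
  case True then show ?thesis by (simp add: nabla_op_def L1)
next
  case False
  have "\<alpha> \<noteq> 0" using assms by (metis of_nat_0 neg_0_equal_iff_equal)
  then have a: "\<alpha> < 0" using False by simp
  define n where "n = nat \<lceil>- \<alpha>\<rceil>"
  have rn: "real n = of_int \<lceil>- \<alpha>\<rceil>" unfolding n_def using a by simp
  have ge: "real n \<ge> - \<alpha>" unfolding rn by simp
  have ne: "real n - (- \<alpha>) \<noteq> 0"
  proof
    assume "real n - (- \<alpha>) = 0"
    then have "\<alpha> = - real n" by simp
    with assms show False by blast
  qed
  then have pos: "real n + \<alpha> > 0" using ge by simp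
  have "nabla_op b \<alpha> g = (Dm ^^ n) (nabla_sum b (real n + \<alpha>) g)"
    using a ne unfolding nabla_op_def nabla_diff_def Let_def n_def[symmetric]
    by (simp add: odp_funpow)
  also have "\<dots> = Q b \<alpha> g" unfolding L1[OF pos] L2iter by simp
  finally show ?thesis .
qed

theorem theorem2p10:
  fixes \<alpha> b :: real and p :: nat and f :: "real \<Rightarrow> real" and j :: nat
  assumes "p > 0"
  defines "t \<equiv> b - real p - real j"
  shows "nabla_op b \<alpha> (ominus_delta_pow p f) t =
           ominus_delta_pow p (nabla_op b \<alpha> f) t
           - (\<Sum>k<p. rising (b - t) (\<alpha> - real p + real k) / Gamma (\<alpha> + real k - real p + 1)
                       * ominus_delta_pow k f b)"
proof (cases "\<exists>n::nat. \<alpha> = - real n")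
  case True
  then obtain n where n: "\<alpha> = - real n" by blast
  have z: "Gamma (\<alpha> + real k - real p + 1) = 0" if kp: "k < p" for k
  proof -
    obtain d where d: "p = Suc (k + d)" using less_imp_Suc_add[OF kp] by (elim exE)
    have "real p = real k + real d + 1" using d by simp
    then have "\<alpha> + real k - real p + 1 = - real (n + d)" using n by simp
    then show ?thesis by (simp only: Gamma_neg_of_nat)
  qed
  have "(Dm ^^ n) ((Dm ^^ p) f) = (Dm ^^ p) ((Dm ^^ n) f)"
    by (metis add.commute comp_apply funpow_add)
  have s0: "(\<Sum>k<p. rising (b - t) (\<alpha> - real p + real k) / Gamma (\<alpha> + real k - real p + 1)
                       * ominus_delta_pow k f b) = 0"
  proof (rule sum.neutral, intro ballI)
    fix k assume "k \<in> {..<p}"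
    then have "Gamma (\<alpha> + real k - real p + 1) = 0" using z by blast
    then show "rising (b - t) (\<alpha> - real p + real k) / Gamma (\<alpha> + real k - real p + 1)
                       * ominus_delta_pow k f b = 0" by (simp only: div_by_0 mult_zero_left)
  qed
  show ?thesis unfolding s0 unfolding n opA odp_funpow using \<open>(Dm ^^ n) ((Dm ^^ p) f) = _\<close> by simp
next
  case False
  obtain M where M: "p + j = Suc M" using assms by (cases "p + j") auto
  have "real (Suc M) = real p + real j" using M by (metis of_nat_add)
  then have bt: "b - t = real (Suc M)" unfolding t_def by simp
  have c: "rising (b - t) (\<alpha> - real p + real k) / Gamma (\<alpha> + real k - real p + 1)
           = cf (\<alpha> - real p + real k + 1) M" if kp: "k < p" for k
  proof -
    let ?g = "\<alpha> - real p + real k + 1"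
    have "?g \<notin> \<int>\<^sub>\<le>\<^sub>0 \<or> pochhammer ?g M = 0"
    proof (cases "?g \<in> \<int>\<^sub>\<le>\<^sub>0")
      case False then show ?thesis by blast
    next
      case True
      then obtain m where m: "?g = - real m" by (auto elim!: nonpos_Ints_cases')
      have ne: "\<alpha> \<noteq> - real (m + k + 1 - p)" using False by blast
      have "m + k + 1 < p"
      proof (rule ccontr)
        assume "\<not> m + k + 1 < p"
        then have "real (m + k + 1 - p) = real m + real k + 1 - real p" by (simp add: of_nat_diff)
        with m ne show False by linarith
      qed
      then have "m < M" using M by linarith
      then have "pochhammer ?g M = 0" using m by (auto simp: pochhammer_eq_0_iff)
      then show ?thesis by blast
    qed
    from coef[OF this] bt show ?thesis by (simp add: algebra_simps)
  qed
  show ?thesis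
    unfolding opB[OF False] odp_funpow L2iter L3iter[OF bt]
    using c by simp
qed

end
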